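(* Let $(X,\gamma)$ be a probability space and let $E_i\subseteq X$, $i\in\mathbb N$, be pairwise independent measurable sets with $\sum_{i=1}^\infty\gamma(E_i)=\infty$. Then for every measurable $E\subseteq X$ and every $\varepsilon>0$ there exists a positive integer $i$ such that $\gamma(E\cap E_i)>(\gamma(E)-\varepsilon)\gamma(E_i)$. *)

theory Defs
  imports "HOL-Probability.Probability"
begin

end

theory Submission
  imports Defs
begin

lemma (in prob_space) indep_event_prob:
  assumes "indep_event A B" shows "prob (A \<inter> B) = prob A * prob B"
proof -
  have "indep_events (case_bool A B) UNIV" using assms unfolding indep_event_def .
  hence h: "\<forall>J\<subseteq>UNIV. J \<noteq> {} \<longrightarrow> finite J \<longrightarrow> prob (\<Inter>j\<in>J. case_bool A B j) = (\<Prod>j\<in>J. prob (case_bool A B j))"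
    unfolding indep_events_def by (rule conjunct2)
  have "prob (\<Inter>j\<in>UNIV. case_bool A B j) = (\<Prod>j\<in>UNIV. prob (case_bool A B j))"
    using h[rule_format, of UNIV] by simp
  thus ?thesis by (simp add: UNIV_bool Int_commute)
qed

lemma (in prob_space) key:
  fixes I :: "nat set" and F :: "nat \<Rightarrow> 'a set"
  assumes fin: "finite I" and ev: "\<And>i. i\<in>I \<Longrightarrow> F i \<in> events"
   and ind: "\<And>i j. i\<in>I \<Longrightarrow> j\<in>I \<Longrightarrow> i\<noteq>j \<Longrightarrow> prob (F i \<inter> F j) = prob (F i) * prob (F j)"
   and E: "E \<in> events" and eps: "\<epsilon>>0"
   and bad: "\<And>i. i\<in>I \<Longrightarrow> prob (E \<inter> F i) \<le> (prob E - \<epsilon>) * prob (F i)"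
  shows "\<epsilon>^2 * (\<Sum>i\<in>I. prob (F i))^2 \<le> (\<Sum>i\<in>I. prob (F i))"
proof -
  define p where "p i = prob (F i)" for i
  define S where "S = sum p I"
  define t where "t = \<epsilon> * S"
  define a where "a i x = indicator (F i) x - p i" for i and x :: 'a
  define f where "f x = (\<Sum>i\<in>I. a i x) + t * indicator E x" for x
  have intind: "integrable M (indicat_real A)" if "A \<in> events" for A
    using that by (intro Bochner_Integration.integrable_real_indicator) (simp_all add: emeasure_finite less_top[symmetric])
  have intind': "integral\<^sup>L M (indicat_real A) = prob A" if "A \<in> events" for A
    using that sets.sets_into_space[OF that] by (simp add: integral_indicator Int_absorb2)
  have ic: "integrable M (\<lambda>x. c :: real)" for c by simp
  have aa: "a i x * a j x = indicator (F i \<inter> F j) x - p j * indicator (F i) x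
      - p i * indicator (F j) x + p i * p j" for i j x
    unfolding a_def indicator_inter_arith by (simp add: algebra_simps)
  have ae: "a i x * indicator E x = indicator (E \<inter> F i) x - p i * indicator E x" for i x
    unfolding a_def indicator_inter_arith by (simp add: algebra_simps)
  have int_aa: "integrable M (\<lambda>x. a i x * a j x)" if "i \<in> I" "j \<in> I" for i j
    unfolding aa using that ev
    by (intro Bochner_Integration.integrable_add Bochner_Integration.integrable_diff integrable_mult_right intind ic sets.Int) auto
  have I_aa: "integral\<^sup>L M (\<lambda>x. a i x * a j x) = prob (F i \<inter> F j) - p i * p j" if "i \<in> I" "j \<in> I" for i j
  proof -
    have e: "F i \<in> events" "F j \<in> events" "F i \<inter> F j \<in> events" using that ev by auto
    have "integral\<^sup>L M (\<lambda>x. a i x * a j x) = integral\<^sup>L M (\<lambda>x. indicator (F i \<inter> F j) x - p j * indicator (F i) x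
      - p i * indicator (F j) x) + integral\<^sup>L M (\<lambda>x. p i * p j)"
      unfolding aa using e by (intro Bochner_Integration.integral_add Bochner_Integration.integrable_diff integrable_mult_right intind ic)
    also have "integral\<^sup>L M (\<lambda>x. indicator (F i \<inter> F j) x - p j * indicator (F i) x
      - p i * indicator (F j) x) = integral\<^sup>L M (\<lambda>x. indicator (F i \<inter> F j) x - p j * indicator (F i) x)
      - integral\<^sup>L M (\<lambda>x. p i * indicator (F j) x)"
      using e by (intro Bochner_Integration.integral_diff Bochner_Integration.integrable_diff integrable_mult_right intind)
    also have "integral\<^sup>L M (\<lambda>x. indicator (F i \<inter> F j) x - p j * indicator (F i) x)
      = prob (F i \<inter> F j) - p j * p i"
      using e by (subst Bochner_Integration.integral_diff) (auto intro!: integrable_mult_right intind simp: intind' p_def)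
    finally show ?thesis using e by (simp add: intind' p_def prob_space)
  qed
  have int_ae: "integrable M (\<lambda>x. a i x * indicator E x)" if "i \<in> I" for i
    unfolding ae using that ev E
    by (intro Bochner_Integration.integrable_diff integrable_mult_right intind sets.Int) auto
  have I_ae: "integral\<^sup>L M (\<lambda>x. a i x * indicator E x) = prob (E \<inter> F i) - p i * prob E" if "i \<in> I" for i
    unfolding ae using that ev E
    by (subst Bochner_Integration.integral_diff) (auto intro!: integrable_mult_right intind simp: intind')
  have ff: "f x ^ 2 = (\<Sum>i\<in>I. \<Sum>j\<in>I. a i x * a j x) + 2 * t * (\<Sum>i\<in>I. a i x * indicator E x)
      + t^2 * indicator E x" for x
  proof -
    have ii: "indicator E x * indicator E x = (indicator E x :: real)" by (simp add: indicator_def)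
    show ?thesis unfolding f_def power2_eq_square sum_product[symmetric] sum_distrib_right[symmetric]
      by (simp add: algebra_simps ii)
  qed
  have int1: "integrable M (\<lambda>x. (\<Sum>i\<in>I. \<Sum>j\<in>I. a i x * a j x))"
    using int_aa by (intro Bochner_Integration.integrable_sum) auto
  have int2: "integrable M (\<lambda>x. 2 * t * (\<Sum>i\<in>I. a i x * indicator E x))"
    using int_ae by (intro integrable_mult_right Bochner_Integration.integrable_sum) auto
  have int3: "integrable M (\<lambda>x. t^2 * indicator E x)"
    using E by (intro integrable_mult_right intind)
  have "0 \<le> integral\<^sup>L M (\<lambda>x. f x ^ 2)" by (rule Bochner_Integration.integral_nonneg) auto
  also have "integral\<^sup>L M (\<lambda>x. f x ^ 2) = (\<Sum>i\<in>I. \<Sum>j\<in>I. prob (F i \<inter> F j) - p i * p j)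
     + 2 * t * (\<Sum>i\<in>I. prob (E \<inter> F i) - p i * prob E) + t^2 * prob E"
    unfolding ff using int1 int2 int3 int_aa int_ae E
    by (simp add: Bochner_Integration.integral_sum I_aa I_ae intind' Bochner_Integration.integrable_sum)
  finally have main: "0 \<le> (\<Sum>i\<in>I. \<Sum>j\<in>I. prob (F i \<inter> F j) - p i * p j)
     + 2 * t * (\<Sum>i\<in>I. prob (E \<inter> F i) - p i * prob E) + t^2 * prob E" .
  have s1: "(\<Sum>i\<in>I. \<Sum>j\<in>I. prob (F i \<inter> F j) - p i * p j) \<le> S"
  proof -
    have "(\<Sum>i\<in>I. \<Sum>j\<in>I. prob (F i \<inter> F j) - p i * p j) = (\<Sum>i\<in>I. \<Sum>j\<in>I. if j = i then p i - p i * p i else 0)"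
      using ind by (intro sum.cong refl) (auto simp: p_def)
    also have "\<dots> = (\<Sum>i\<in>I. p i - p i * p i)" using fin by simp
    also have "\<dots> \<le> S" unfolding S_def by (intro sum_mono) auto
    finally show ?thesis .
  qed
  have S0: "S \<ge> 0" unfolding S_def p_def by (intro sum_nonneg) auto
  have s2: "(\<Sum>i\<in>I. prob (E \<inter> F i) - p i * prob E) \<le> - \<epsilon> * S"
  proof -
    have "(\<Sum>i\<in>I. prob (E \<inter> F i) - p i * prob E) \<le> (\<Sum>i\<in>I. - \<epsilon> * p i)"
      using bad by (intro sum_mono) (auto simp: p_def algebra_simps)
    thus ?thesis unfolding S_def by (simp add: sum_distrib_left)
  qed
  have t0: "t \<ge> 0" unfolding t_def using eps S0 by simp
  have "2 * t * (\<Sum>i\<in>I. prob (E \<inter> F i) - p i * prob E) \<le> 2 * t * (- \<epsilon> * S)"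
    using s2 t0 by (intro mult_left_mono) auto
  moreover have "t^2 * prob E \<le> t^2" using prob_le_1 by (simp add: mult_left_le)
  ultimately have "0 \<le> S + 2 * t * (- \<epsilon> * S) + t^2" using main s1 by linarith
  hence "0 \<le> S - (\<epsilon> * S)^2" unfolding t_def by (simp add: power2_eq_square algebra_simps)
  hence "\<epsilon>^2 * S^2 \<le> S" by (simp add: power_mult_distrib)
  moreover have "S = (\<Sum>i\<in>I. prob (F i))" by (simp add: S_def p_def)
  ultimately show ?thesis by simp
qed

theorem mainTheorem11:
  fixes M :: "'a measure" and Es :: "nat \<Rightarrow> 'a set" and E :: "'a set" and \<epsilon> :: real
  assumes "prob_space M"
    and "\<And>i. i \<ge> 1 \<Longrightarrow> Es i \<in> sets M"
    and "\<And>i j. i \<ge> 1 \<Longrightarrow> j \<ge> 1 \<Longrightarrow> i \<noteq> j \<Longrightarrow> prob_space.indep_event M (Es i) (Es j)"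
    and "\<not> summable (\<lambda>i. measure M (Es (Suc i)))"
    and "E \<in> sets M"
    and "\<epsilon> > 0"
  shows "\<exists>i::nat. i \<ge> 1 \<and> measure M (E \<inter> Es i) > (measure M E - \<epsilon>) * measure M (Es i)"
proof (rule ccontr)
  interpret prob_space M by fact
  assume nt: "\<not> (\<exists>i::nat. i \<ge> 1 \<and> measure M (E \<inter> Es i) > (measure M E - \<epsilon>) * measure M (Es i))"
  hence bad: "\<And>i. i \<ge> 1 \<Longrightarrow> measure M (E \<inter> Es i) \<le> (measure M E - \<epsilon>) * measure M (Es i)"
    by (auto simp: not_less)
  have bound: "(\<Sum>i<n. measure M (Es (Suc i))) \<le> 1 / \<epsilon>^2" for n
  proof -
    define S where "S = (\<Sum>i\<in>Suc ` {..<n}. measure M (Es i))"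
    have SS: "S = (\<Sum>i<n. measure M (Es (Suc i)))"
      unfolding S_def by (subst sum.reindex) auto
    have k: "\<epsilon>^2 * S^2 \<le> S" unfolding S_def
    proof (rule key[where E = E])
      show "finite (Suc ` {..<n})" by simp
      show "Es i \<in> events" if "i \<in> Suc ` {..<n}" for i using that assms(2) by auto
      show "prob (Es i \<inter> Es j) = prob (Es i) * prob (Es j)"
        if "i \<in> Suc ` {..<n}" "j \<in> Suc ` {..<n}" "i \<noteq> j" for i j
        using that by (intro indep_event_prob assms(3)) auto
      show "E \<in> events" by (rule assms(5))
      show "\<epsilon> > 0" by (rule assms(6))
      show "prob (E \<inter> Es i) \<le> (prob E - \<epsilon>) * prob (Es i)" if "i \<in> Suc ` {..<n}" for i
        using that by (intro bad) auto
    qed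
    have S0: "S \<ge> 0" unfolding S_def by (intro sum_nonneg) auto
    have "S \<le> 1 / \<epsilon>^2"
    proof (cases "S = 0")
      case True thus ?thesis by simp
    next
      case False
      with S0 have "S > 0" by simp
      from k have "S * (\<epsilon>^2 * S) \<le> S * 1" by (simp add: power2_eq_square algebra_simps)
      hence "\<epsilon>^2 * S \<le> 1" using \<open>S > 0\<close> by (simp add: mult_le_cancel_left_pos)
      moreover have "\<epsilon>^2 > 0" using assms(6) by simp
      ultimately show ?thesis by (simp add: le_divide_eq mult.commute)
    qed
    thus ?thesis using SS by simp
  qed
  have "summable (\<lambda>i. measure M (Es (Suc i)))"
    by (rule summableI_nonneg_bounded[OF _ bound]) auto
  with assms(4) show False by simp
qed

end
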